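(* Let $\Psi$ be a root system in a real inner product space, with base $\{\gamma_1,\dots,\gamma_m\}$ and positive roots $\Psi^+$, and let $\mathfrak{s}^+=\{H\in\operatorname{span}\Psi:(H,\gamma_i)>0 \text{ for all } i=1,\dots,m\}$. Let $\Psi_1=\operatorname{span}_{\mathbb{Z}}\{\gamma_2,\dots,\gamma_m\}\cap\Psi$, with Weyl group $\mathcal{V}_1$ (generated by the reflections $\sigma_\alpha(v)=v-\frac{2(v,\alpha)}{(\alpha,\alpha)}\alpha$, $\alpha\in\Psi_1$), and let $\mathfrak{c}^+=\{H\in\operatorname{span}\Psi_1:(H,\gamma_i)>0\text{ for } i=2,\dots,m\}$. Let $$R_1=\{H\in\mathfrak{s}^+:\|H\|\ge1,\ (\gamma_1,H)\ge(\gamma_j,H)\text{ for all } j\},$$ and define $P:\operatorname{span}\Psi\to\operatorname{span}\Psi$ by $P(H)=\frac{1}{|\mathcal{V}_1|}\sum_{\sigma\in\mathcal{V}_1}\sigma(H)$. Then: (i) $\sigma(P(H))=P(H)$ for all $\sigma\in\mathcal{V}_1$ and $H\in\operatorname{span}\Psi$; (ii) $P$ is the orthogonal projection from $\operatorname{span}\Psi$ onto $(\operatorname{span}\Psi_1)^\perp$, so $I-P$ is the orthogonal projection from $\operatorname{span}\Psi$ onto $\operatorname{span}\Psi_1$; (iii) $I-P$ maps $\mathfrak{s}^+$ into $\mathfrak{c}^+$; (iv) there are constants $a,b>0$ such that $\|P(H)\|\ge a\|H\|$ and $\|(I-P)H\|\le b\|P(H)\|$ for all $H\in R_1$.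
   Context: In the paper $\Psi$ arises as a simple subroot system of an irreducible root system $\Phi$ with base $\Delta$, i.e. $\Psi=\operatorname{span}_{\mathbb{Z}}\{\gamma_1,\dots,\gamma_m\}\cap\Phi$ for some subset $\{\gamma_1,\dots,\gamma_m\}\subseteq\Delta$, which is then a base of $\Psi$. *)

theory Defs
  imports "HOL-Analysis.Analysis"
begin

definition refl_root :: "'a::real_inner \<Rightarrow> 'a \<Rightarrow> 'a" where
  "refl_root \<alpha> v = v - ((2 * (v \<bullet> \<alpha>)) / (\<alpha> \<bullet> \<alpha>)) *\<^sub>R \<alpha>"

definition root_system :: "'a::real_inner set \<Rightarrow> bool" where
  "root_system \<Psi> \<longleftrightarrow>
     finite \<Psi> \<and> 0 \<notin> \<Psi> \<and>
     (\<forall>\<alpha>\<in>\<Psi>. \<forall>c::real. c *\<^sub>R \<alpha> \<in> \<Psi> \<longrightarrow> c = 1 \<or> c = -1) \<and>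
     (\<forall>\<alpha>\<in>\<Psi>. \<forall>\<beta>\<in>\<Psi>. refl_root \<alpha> \<beta> \<in> \<Psi>) \<and>
     (\<forall>\<alpha>\<in>\<Psi>. \<forall>\<beta>\<in>\<Psi>. 2 * (\<beta> \<bullet> \<alpha>) / (\<alpha> \<bullet> \<alpha>) \<in> \<int>)"

definition is_base :: "'a::real_inner set \<Rightarrow> (nat \<Rightarrow> 'a) \<Rightarrow> nat \<Rightarrow> bool" where
  "is_base \<Psi> \<gamma> m \<longleftrightarrow>
     inj_on \<gamma> {1..m} \<and> \<gamma> ` {1..m} \<subseteq> \<Psi> \<and> independent (\<gamma> ` {1..m}) \<and>
     (\<forall>\<beta>\<in>\<Psi>. \<exists>c::nat \<Rightarrow> int. \<beta> = (\<Sum>i=1..m. of_int (c i) *\<^sub>R \<gamma> i) \<and>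
        ((\<forall>i\<in>{1..m}. c i \<ge> 0) \<or> (\<forall>i\<in>{1..m}. c i \<le> 0)))"

definition int_span :: "(nat \<Rightarrow> 'a::real_vector) \<Rightarrow> nat set \<Rightarrow> 'a set" where
  "int_span \<gamma> I = {(\<Sum>i\<in>I. of_int (c i) *\<^sub>R \<gamma> i) | c :: nat \<Rightarrow> int. True}"

text \<open>Weyl group generated by reflections in roots of S (as maps on the space);
  since reflections are involutions, the generated monoid is the generated group.\<close>
inductive_set weyl_group :: "'a::real_inner set \<Rightarrow> ('a \<Rightarrow> 'a) set" for S where
  weyl_id: "id \<in> weyl_group S"
| weyl_step: "\<alpha> \<in> S \<Longrightarrow> w \<in> weyl_group S \<Longrightarrow> refl_root \<alpha> \<circ> w \<in> weyl_group S"

end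

theory Submission
  imports Defs
begin


lemma refl_linear: "linear (refl_root \<alpha>)"
  unfolding refl_root_def
  by (rule linearI) (simp_all add: inner_add_left add_divide_distrib scaleR_add_left algebra_simps)

lemma refl_invol: "refl_root \<alpha> (refl_root \<alpha> v) = v"
proof (cases "\<alpha> = 0")
  case True then show ?thesis by (simp add: refl_root_def)
next
  case False
  then have "\<alpha> \<bullet> \<alpha> \<noteq> 0" by simp
  then show ?thesis by (simp add: refl_root_def inner_diff_left algebra_simps)
qed

lemma refl_fix: "z \<bullet> \<alpha> = 0 \<Longrightarrow> refl_root \<alpha> z = z"
  by (simp add: refl_root_def)

lemma weyl_linear: "w \<in> weyl_group S \<Longrightarrow> linear w"
proof (induction rule: weyl_group.induct)
  case weyl_id then show ?case by (simp add: linear_id[unfolded id_def])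
next
  case (weyl_step \<alpha> w)
  show ?case using linear_compose[OF weyl_step(3) refl_linear] by blast
qed

lemma weyl_inj: "w \<in> weyl_group S \<Longrightarrow> inj w"
proof (induction rule: weyl_group.induct)
  case weyl_id then show ?case by simp
next
  case (weyl_step \<alpha> w)
  have "inj (refl_root \<alpha>)" by (metis injI refl_invol)
  then show ?case using weyl_step inj_compose[of "refl_root \<alpha>" w] by blast
qed

lemma weyl_span: "w \<in> weyl_group S \<Longrightarrow> w x - x \<in> span S"
proof (induction rule: weyl_group.induct)
  case weyl_id then show ?case by (simp add: span_zero)
next
  case (weyl_step \<alpha> w)
  have "(refl_root \<alpha> \<circ> w) x - x = (w x - x) - ((2 * (w x \<bullet> \<alpha>)) / (\<alpha> \<bullet> \<alpha>)) *\<^sub>R \<alpha>"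
    by (simp add: refl_root_def)
  moreover have "(w x - x) - ((2 * (w x \<bullet> \<alpha>)) / (\<alpha> \<bullet> \<alpha>)) *\<^sub>R \<alpha> \<in> span S"
    by (rule span_diff[OF weyl_step(3) span_scale[OF span_base[OF weyl_step(1)]]])
  ultimately show ?case by (metis (no_types))
qed

lemma weyl_fix: "w \<in> weyl_group S \<Longrightarrow> (\<forall>\<alpha>\<in>S. z \<bullet> \<alpha> = 0) \<Longrightarrow> w z = z"
  by (induction rule: weyl_group.induct) (auto simp: refl_fix)

lemma weyl_comp: "\<sigma> \<in> weyl_group S \<Longrightarrow> w \<in> weyl_group S \<Longrightarrow> \<sigma> \<circ> w \<in> weyl_group S"
  by (induction rule: weyl_group.induct) (auto simp: comp_assoc intro: weyl_group.weyl_step)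

lemma weyl_maps: "w \<in> weyl_group S \<Longrightarrow> (\<forall>\<alpha>\<in>S. \<forall>\<beta>\<in>S. refl_root \<alpha> \<beta> \<in> S) \<Longrightarrow> \<beta> \<in> S \<Longrightarrow> w \<beta> \<in> S"
  by (induction arbitrary: \<beta> rule: weyl_group.induct) auto

lemma weyl_finite:
  fixes S :: "'a::euclidean_space set"
  assumes "finite S" "\<forall>\<alpha>\<in>S. \<forall>\<beta>\<in>S. refl_root \<alpha> \<beta> \<in> S"
  shows "finite (weyl_group S)"
proof -
  have inj: "inj_on (\<lambda>w. restrict w S) (weyl_group S)"
  proof (rule inj_onI)
    fix w1 w2 assume w: "w1 \<in> weyl_group S" "w2 \<in> weyl_group S" and e: "restrict w1 S = restrict w2 S"
    show "w1 = w2"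
    proof
      fix x
      obtain y z where y: "y \<in> span S" and z: "\<And>u. u \<in> span S \<Longrightarrow> orthogonal z u" and x: "x = y + z"
        using orthogonal_subspace_decomp_exists[of S x] by metis
      have zS: "\<forall>\<alpha>\<in>S. z \<bullet> \<alpha> = 0" using z span_base by (auto simp: orthogonal_def)
      have "w1 y = w2 y"
        by (rule linear_eq_on_span[OF weyl_linear[OF w(1)] weyl_linear[OF w(2)] _ y])
           (metis e restrict_apply')
      moreover have "w1 z = w2 z" using weyl_fix[OF w(1) zS] weyl_fix[OF w(2) zS] by simp
      ultimately show "w1 x = w2 x" using x linear_add[OF weyl_linear[OF w(1)]] linear_add[OF weyl_linear[OF w(2)]] by simp
    qed
  qed
  have "(\<lambda>w. restrict w S) ` weyl_group S \<subseteq> S \<rightarrow>\<^sub>E S"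
    using weyl_maps assms(2) by auto
  moreover have "finite (S \<rightarrow>\<^sub>E S)" using assms(1) by (simp add: finite_PiE)
  ultimately show ?thesis using inj finite_imageD finite_subset by metis
qed



lemma indep_coeffs:
  fixes \<gamma> :: "nat \<Rightarrow> 'a::real_vector"
  assumes "inj_on \<gamma> I" "independent (\<gamma> ` I)" "finite I" "(\<Sum>l\<in>I. a l *\<^sub>R \<gamma> l) = 0" "l \<in> I"
  shows "a l = 0"
proof -
  define u where "u v = a (inv_into I \<gamma> v)" for v
  have "(\<Sum>v\<in>\<gamma> ` I. u v *\<^sub>R v) = (\<Sum>l\<in>I. a l *\<^sub>R \<gamma> l)"
    using assms(1) by (simp add: sum.reindex u_def)
  then have "(\<Sum>v\<in>\<gamma> ` I. u v *\<^sub>R v) = 0" using assms(4) by simp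
  then have "u (\<gamma> l) = 0" using assms(2,3,5) independent_explicit_module by blast
  then show ?thesis using assms(1,5) by (simp add: u_def)
qed

lemma dom_zero:
  fixes g :: "nat \<Rightarrow> 'a::real_inner"
  assumes "finite J" "k \<notin> J"
    and ob: "\<And>i j. i \<in> J \<Longrightarrow> j \<in> J \<Longrightarrow> i \<noteq> j \<Longrightarrow> g i \<bullet> g j \<le> 0"
    and obk: "\<And>j. j \<in> J \<Longrightarrow> g k \<bullet> g j \<le> 0"
    and H: "H = (\<Sum>j\<in>J. c j *\<^sub>R g j)"
    and pos: "\<And>j. j \<in> J \<Longrightarrow> H \<bullet> g j \<ge> 0"
    and dom: "\<And>j. j \<in> J \<Longrightarrow> g k \<bullet> H \<ge> g j \<bullet> H"
  shows "H = 0"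
proof -
  define p where "p j = max (c j) 0" for j
  define q where "q j = max (- c j) 0" for j
  define Hp where "Hp = (\<Sum>j\<in>J. p j *\<^sub>R g j)"
  define Hq where "Hq = (\<Sum>j\<in>J. q j *\<^sub>R g j)"
  have cpq: "c j = p j - q j" for j by (simp add: p_def q_def)
  have HH: "H = Hp - Hq"
    unfolding H Hp_def Hq_def by (simp add: cpq scaleR_diff_left sum_subtractf)
  have "Hq \<bullet> Hp = (\<Sum>j\<in>J. \<Sum>i\<in>J. q i * p j * (g i \<bullet> g j))"
    unfolding Hp_def Hq_def by (simp add: inner_sum_left inner_sum_right sum_distrib_left mult.assoc mult.left_commute)
  also have "\<dots> \<le> 0"
  proof (intro sum_nonpos)
    fix j i assume ij: "i \<in> J" "j \<in> J"
    show "q i * p j * (g i \<bullet> g j) \<le> 0"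
    proof (cases "i = j")
      case True then show ?thesis by (simp add: p_def q_def)
    next
      case False
      have "q i * p j \<ge> 0" by (simp add: p_def q_def)
      then show ?thesis using ob[OF ij False] by (simp add: mult_nonneg_nonpos)
    qed
  qed
  finally have a: "Hq \<bullet> Hp \<le> 0" .
  have "Hq \<bullet> H = (\<Sum>i\<in>J. q i * (g i \<bullet> H))"
    unfolding Hq_def by (simp add: inner_sum_left)
  also have "\<dots> \<ge> 0"
    using pos by (intro sum_nonneg) (simp add: q_def inner_commute)
  finally have b: "Hq \<bullet> H \<ge> 0" .
  have "Hq \<bullet> Hq = Hq \<bullet> Hp - Hq \<bullet> H" using HH by (simp add: inner_diff_right)
  then have "Hq \<bullet> Hq \<le> 0" using a b by simp
  then have "Hq = 0" by (metis antisym inner_ge_zero inner_eq_zero_iff)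
  then have HP: "H = Hp" using HH by simp
  have "H \<bullet> H = (\<Sum>j\<in>J. p j * (g j \<bullet> H))"
    using HP unfolding Hp_def by (simp add: inner_sum_left)
  also have "\<dots> \<le> (\<Sum>j\<in>J. p j * (g k \<bullet> H))"
    using dom by (intro sum_mono mult_left_mono) (auto simp: p_def)
  also have "\<dots> = (\<Sum>j\<in>J. p j) * (g k \<bullet> H)" by (simp add: sum_distrib_right)
  also have "\<dots> \<le> 0"
  proof -
    have "g k \<bullet> H = (\<Sum>j\<in>J. p j * (g k \<bullet> g j))"
      using HP unfolding Hp_def by (simp add: inner_sum_right)
    also have "\<dots> \<le> 0" using obk by (intro sum_nonpos) (simp add: p_def mult_nonneg_nonpos)
    finally have "g k \<bullet> H \<le> 0" .
    moreover have "(\<Sum>j\<in>J. p j) \<ge> 0" by (intro sum_nonneg) (simp add: p_def)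
    ultimately show ?thesis by (simp add: mult_nonneg_nonpos)
  qed
  finally show "H = 0" by (metis antisym inner_ge_zero inner_eq_zero_iff)
qed



theorem lemma1:
  fixes \<Psi> :: "'a::euclidean_space set" and \<gamma> :: "nat \<Rightarrow> 'a" and m :: nat
    and \<Psi>\<^sub>1 :: "'a set" and V\<^sub>1 :: "('a \<Rightarrow> 'a) set"
    and splus cplus R\<^sub>1 :: "'a set" and P :: "'a \<Rightarrow> 'a"
  assumes "root_system \<Psi>"
    and "m \<ge> 1"
    and "is_base \<Psi> \<gamma> m"
    and "splus = {H \<in> span \<Psi>. \<forall>i\<in>{1..m}. H \<bullet> \<gamma> i > 0}"
    and "\<Psi>\<^sub>1 = int_span \<gamma> {2..m} \<inter> \<Psi>"
    and "V\<^sub>1 = weyl_group \<Psi>\<^sub>1"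
    and "cplus = {H \<in> span \<Psi>\<^sub>1. \<forall>i\<in>{2..m}. H \<bullet> \<gamma> i > 0}"
    and "R\<^sub>1 = {H \<in> splus. norm H \<ge> 1 \<and> (\<forall>j\<in>{1..m}. \<gamma> 1 \<bullet> H \<ge> \<gamma> j \<bullet> H)}"
    and "\<And>H. P H = (1 / real (card V\<^sub>1)) *\<^sub>R (\<Sum>\<sigma>\<in>V\<^sub>1. \<sigma> H)"
  shows "(\<forall>\<sigma>\<in>V\<^sub>1. \<forall>H\<in>span \<Psi>. \<sigma> (P H) = P H)
       \<and> (\<forall>H\<in>span \<Psi>. P H \<in> span \<Psi> \<and> (\<forall>x\<in>span \<Psi>\<^sub>1. orthogonal (P H) x)
                        \<and> H - P H \<in> span \<Psi>\<^sub>1)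
       \<and> (\<forall>H\<in>span \<Psi>. H - P H \<in> span \<Psi>\<^sub>1
                        \<and> (\<forall>x\<in>span \<Psi>\<^sub>1. orthogonal (H - (H - P H)) x))
       \<and> (\<forall>H\<in>splus. H - P H \<in> cplus)
       \<and> (\<exists>a>0. \<exists>b>0. \<forall>H\<in>R\<^sub>1. norm (P H) \<ge> a * norm H \<and> norm (H - P H) \<le> b * norm (P H))"
proof -
  note rs = assms(1)[unfolded root_system_def]
  note base = assms(3)[unfolded is_base_def]
  have finPsi: "finite \<Psi>" and zPsi: "0 \<notin> \<Psi>" and reflPsi: "\<And>\<alpha> \<beta>. \<alpha> \<in> \<Psi> \<Longrightarrow> \<beta> \<in> \<Psi> \<Longrightarrow> refl_root \<alpha> \<beta> \<in> \<Psi>"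
    and intPsi: "\<And>\<alpha> \<beta>. \<alpha> \<in> \<Psi> \<Longrightarrow> \<beta> \<in> \<Psi> \<Longrightarrow> 2 * (\<beta> \<bullet> \<alpha>) / (\<alpha> \<bullet> \<alpha>) \<in> \<int>"
    using rs by auto
  have injg: "inj_on \<gamma> {1..m}" and gPsi: "\<And>i. i \<in> {1..m} \<Longrightarrow> \<gamma> i \<in> \<Psi>"
    and indg: "independent (\<gamma> ` {1..m})"
    and decomp: "\<And>\<beta>. \<beta> \<in> \<Psi> \<Longrightarrow> \<exists>c::nat \<Rightarrow> int. \<beta> = (\<Sum>i=1..m. of_int (c i) *\<^sub>R \<gamma> i) \<and>
        ((\<forall>i\<in>{1..m}. c i \<ge> 0) \<or> (\<forall>i\<in>{1..m}. c i \<le> 0))"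
    using base by auto
  have P1sub: "\<Psi>\<^sub>1 \<subseteq> \<Psi>" using assms(5) by auto
  have finP1: "finite \<Psi>\<^sub>1" using P1sub finPsi finite_subset by blast
  have reflP1: "\<forall>\<alpha>\<in>\<Psi>\<^sub>1. \<forall>\<beta>\<in>\<Psi>\<^sub>1. refl_root \<alpha> \<beta> \<in> \<Psi>\<^sub>1"
  proof (intro ballI)
    fix \<alpha> \<beta> assume a: "\<alpha> \<in> \<Psi>\<^sub>1" and b: "\<beta> \<in> \<Psi>\<^sub>1"
    then have aP: "\<alpha> \<in> \<Psi>" and bP: "\<beta> \<in> \<Psi>" using P1sub by auto
    obtain ca :: "nat \<Rightarrow> int" where ca: "\<alpha> = (\<Sum>i\<in>{2..m}. of_int (ca i) *\<^sub>R \<gamma> i)"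
      using a assms(5) by (auto simp: int_span_def)
    obtain cb :: "nat \<Rightarrow> int" where cb: "\<beta> = (\<Sum>i\<in>{2..m}. of_int (cb i) *\<^sub>R \<gamma> i)"
      using b assms(5) by (auto simp: int_span_def)
    obtain n :: int where n: "2 * (\<beta> \<bullet> \<alpha>) / (\<alpha> \<bullet> \<alpha>) = of_int n"
      using intPsi[OF aP bP] Ints_cases by metis
    have "refl_root \<alpha> \<beta> = \<beta> - of_int n *\<^sub>R \<alpha>" by (simp add: refl_root_def n)
    also have "\<dots> = (\<Sum>i\<in>{2..m}. of_int (cb i - n * ca i) *\<^sub>R \<gamma> i)"
      unfolding ca cb by (simp add: scaleR_sum_right sum_subtractf[symmetric] scaleR_diff_left)
    finally have "refl_root \<alpha> \<beta> \<in> int_span \<gamma> {2..m}"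
      unfolding int_span_def by (intro CollectI exI[where x="\<lambda>i. cb i - n * ca i"]) simp
    then show "refl_root \<alpha> \<beta> \<in> \<Psi>\<^sub>1" using assms(5) reflPsi[OF aP bP] by auto
  qed
  have gP1: "\<gamma> i \<in> \<Psi>\<^sub>1" if i: "i \<in> {2..m}" for i
  proof -
    have "(\<Sum>j\<in>{2..m}. of_int (if j = i then 1 else 0) *\<^sub>R \<gamma> j) = \<gamma> i"
    proof -
      have "(\<Sum>j\<in>{2..m}. of_int (if j = i then 1 else 0) *\<^sub>R \<gamma> j) = (\<Sum>j\<in>{2..m}. if j = i then \<gamma> j else 0)"
        by (intro sum.cong) auto
      then show ?thesis using i by simp
    qed
    then have "\<gamma> i \<in> int_span \<gamma> {2..m}" unfolding int_span_def
      by (intro CollectI exI[where x="\<lambda>j. if j = i then 1 else 0"]) simp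
    then show ?thesis using assms(5) gPsi i by auto
  qed
  have P1span: "\<Psi>\<^sub>1 \<subseteq> span (\<gamma> ` {2..m})"
  proof
    fix \<beta> assume "\<beta> \<in> \<Psi>\<^sub>1"
    then obtain c :: "nat \<Rightarrow> int" where c: "\<beta> = (\<Sum>i\<in>{2..m}. of_int (c i) *\<^sub>R \<gamma> i)"
      using assms(5) by (auto simp: int_span_def)
    show "\<beta> \<in> span (\<gamma> ` {2..m})" unfolding c
      by (intro span_sum span_scale span_base) auto
  qed
  have finV: "finite V\<^sub>1" using weyl_finite[OF finP1 reflP1] assms(6) by simp
  have idV: "id \<in> V\<^sub>1" using assms(6) weyl_group.weyl_id by simp
  define N where "N = real (card V\<^sub>1)"
  have Npos: "N > 0" using finV idV by (auto simp: N_def card_gt_0_iff)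
  have Peq: "P H = (1 / N) *\<^sub>R (\<Sum>\<sigma>\<in>V\<^sub>1. \<sigma> H)" for H using assms(9) N_def by simp
  have linV: "\<And>\<sigma>. \<sigma> \<in> V\<^sub>1 \<Longrightarrow> linear \<sigma>" using weyl_linear assms(6) by blast
  have linP: "linear P"
  proof -
    have "linear (\<lambda>H. \<Sum>\<sigma>\<in>V\<^sub>1. \<sigma> H)" using linV by (intro linear_compose_sum) auto
    then have "linear (\<lambda>H. (1 / N) *\<^sub>R (\<Sum>\<sigma>\<in>V\<^sub>1. \<sigma> H))"
      using linear_add[OF \<open>linear (\<lambda>H. \<Sum>\<sigma>\<in>V\<^sub>1. \<sigma> H)\<close>] linear_scale[OF \<open>linear (\<lambda>H. \<Sum>\<sigma>\<in>V\<^sub>1. \<sigma> H)\<close>]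
      by (intro linearI) (simp_all add: scaleR_add_right)
    moreover have "P = (\<lambda>H. (1 / N) *\<^sub>R (\<Sum>\<sigma>\<in>V\<^sub>1. \<sigma> H))" by (rule ext) (rule Peq)
    ultimately show ?thesis by simp
  qed
  have inv: "\<sigma> (P H) = P H" if s: "\<sigma> \<in> V\<^sub>1" for \<sigma> H
  proof -
    have injs: "inj \<sigma>" using weyl_inj s assms(6) by blast
    have injc: "inj_on (\<lambda>w. \<sigma> \<circ> w) V\<^sub>1"
    proof (rule inj_onI)
      fix w1 w2 assume e: "\<sigma> \<circ> w1 = \<sigma> \<circ> w2"
      show "w1 = w2"
      proof
        fix x
        have "\<sigma> (w1 x) = \<sigma> (w2 x)" using e by (metis comp_apply)
        then show "w1 x = w2 x" using injs by (simp add: inj_eq)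
      qed
    qed
    have img: "(\<lambda>w. \<sigma> \<circ> w) ` V\<^sub>1 = V\<^sub>1"
    proof (rule endo_inj_surj[OF finV])
      show "(\<lambda>w. \<sigma> \<circ> w) ` V\<^sub>1 \<subseteq> V\<^sub>1" using weyl_comp s assms(6) by blast
      show "inj_on (\<lambda>w. \<sigma> \<circ> w) V\<^sub>1" by (rule injc)
    qed
    have "\<sigma> (P H) = (1 / N) *\<^sub>R (\<Sum>w\<in>V\<^sub>1. \<sigma> (w H))"
      using linV[OF s] by (simp add: Peq linear_scale linear_sum)
    also have "(\<Sum>w\<in>V\<^sub>1. \<sigma> (w H)) = (\<Sum>w\<in>(\<lambda>w. \<sigma> \<circ> w) ` V\<^sub>1. w H)"
      by (simp add: sum.reindex[OF injc])
    also have "\<dots> = (\<Sum>w\<in>V\<^sub>1. w H)" by (simp add: img)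
    finally show ?thesis by (simp add: Peq)
  qed
  have orth: "P H \<bullet> \<alpha> = 0" if a: "\<alpha> \<in> \<Psi>\<^sub>1" for H \<alpha>
  proof -
    have rV: "refl_root \<alpha> \<circ> id \<in> V\<^sub>1" using a idV assms(6) weyl_group.weyl_step by blast
    have "refl_root \<alpha> (P H) = P H" using inv[OF rV, of H] by simp
    then have "((2 * (P H \<bullet> \<alpha>)) / (\<alpha> \<bullet> \<alpha>)) *\<^sub>R \<alpha> = 0" by (simp add: refl_root_def)
    moreover have "\<alpha> \<noteq> 0" using a P1sub zPsi by auto
    ultimately show ?thesis by simp
  qed
  have orthS: "orthogonal (P H) x" if "x \<in> span \<Psi>\<^sub>1" for H x
    using that by (rule orthogonal_to_span) (simp add: orthogonal_def orth)
  have diffspan: "H - P H \<in> span \<Psi>\<^sub>1" for H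
  proof -
    have "H - P H = (1 / N) *\<^sub>R (\<Sum>w\<in>V\<^sub>1. H - w H)"
      using Npos by (simp add: Peq sum_subtractf sum_constant_scaleR N_def[symmetric] scaleR_diff_right)
    moreover have "(\<Sum>w\<in>V\<^sub>1. H - w H) \<in> span \<Psi>\<^sub>1"
    proof (intro span_sum)
      fix w assume "w \<in> V\<^sub>1"
      then have "w H - H \<in> span \<Psi>\<^sub>1" using weyl_span assms(6) by blast
      then have "- (w H - H) \<in> span \<Psi>\<^sub>1" by (rule span_neg)
      then show "H - w H \<in> span \<Psi>\<^sub>1" by simp
    qed
    ultimately show ?thesis by (simp add: span_scale)
  qed
  have spanP1: "span \<Psi>\<^sub>1 \<subseteq> span \<Psi>" using P1sub by (rule span_mono)
  have PinS: "P H \<in> span \<Psi>" if "H \<in> span \<Psi>" for H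
  proof -
    have "P H = H - (H - P H)" by simp
    then show ?thesis using span_diff[OF that subsetD[OF spanP1 diffspan[of H]]] by simp
  qed
  have part1: "\<forall>\<sigma>\<in>V\<^sub>1. \<forall>H\<in>span \<Psi>. \<sigma> (P H) = P H" using inv by blast
  have part2: "\<forall>H\<in>span \<Psi>. P H \<in> span \<Psi> \<and> (\<forall>x\<in>span \<Psi>\<^sub>1. orthogonal (P H) x) \<and> H - P H \<in> span \<Psi>\<^sub>1"
    using PinS orthS diffspan by blast
  have part3: "\<forall>H\<in>span \<Psi>. H - P H \<in> span \<Psi>\<^sub>1 \<and> (\<forall>x\<in>span \<Psi>\<^sub>1. orthogonal (H - (H - P H)) x)"
    using orthS diffspan by simp
  have part4: "\<forall>H\<in>splus. H - P H \<in> cplus"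
  proof
    fix H assume H: "H \<in> splus"
    have "(H - P H) \<bullet> \<gamma> i > 0" if i: "i \<in> {2..m}" for i
      using H assms(4) orth[OF gP1[OF i]] i by (auto simp: inner_diff_left)
    then show "H - P H \<in> cplus" using assms(7) diffspan by auto
  qed
  have obtuse: "\<gamma> i \<bullet> \<gamma> j \<le> 0" if ij: "i \<in> {1..m}" "j \<in> {1..m}" "i \<noteq> j" for i j
  proof (rule ccontr)
    assume "\<not> ?thesis"
    then have pos: "\<gamma> i \<bullet> \<gamma> j > 0" by simp
    have gi: "\<gamma> i \<in> \<Psi>" and gj: "\<gamma> j \<in> \<Psi>" using gPsi ij by auto
    have nz: "\<gamma> i \<noteq> 0" using gi zPsi by auto
    obtain k :: int where k: "2 * (\<gamma> j \<bullet> \<gamma> i) / (\<gamma> i \<bullet> \<gamma> i) = of_int k"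
      using intPsi[OF gi gj] Ints_cases by metis
    have "2 * (\<gamma> j \<bullet> \<gamma> i) / (\<gamma> i \<bullet> \<gamma> i) > 0"
      using pos nz by (simp add: inner_commute)
    then have kpos: "k > 0" using k by simp
    have \<beta>: "refl_root (\<gamma> i) (\<gamma> j) \<in> \<Psi>" using reflPsi[OF gi gj] .
    have \<beta>eq: "refl_root (\<gamma> i) (\<gamma> j) = \<gamma> j - of_int k *\<^sub>R \<gamma> i" by (simp add: refl_root_def k)
    obtain c :: "nat \<Rightarrow> int" where c: "refl_root (\<gamma> i) (\<gamma> j) = (\<Sum>l=1..m. of_int (c l) *\<^sub>R \<gamma> l)"
      and sgn: "(\<forall>l\<in>{1..m}. c l \<ge> 0) \<or> (\<forall>l\<in>{1..m}. c l \<le> 0)"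
      using decomp[OF \<beta>] by blast
    define d :: "nat \<Rightarrow> real" where "d l = (if l = j then 1 else if l = i then - of_int k else 0)" for l
    have dsum: "(\<Sum>l=1..m. d l *\<^sub>R \<gamma> l) = \<gamma> j - of_int k *\<^sub>R \<gamma> i"
    proof -
      have "(\<Sum>l=1..m. d l *\<^sub>R \<gamma> l) = (\<Sum>l=1..m. (if l = j then \<gamma> l else 0) + (if l = i then - of_int k *\<^sub>R \<gamma> l else 0))"
        using ij(3) by (intro sum.cong) (auto simp: d_def)
      also have "\<dots> = \<gamma> j - of_int k *\<^sub>R \<gamma> i" using ij by (simp add: sum.distrib sum.delta')
      finally show ?thesis .
    qed
    have s0: "(\<Sum>l=1..m. (real_of_int (c l) - d l) *\<^sub>R \<gamma> l) = 0"
      using c \<beta>eq dsum by (simp add: scaleR_diff_left sum_subtractf)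
    have "\<forall>l\<in>{1..m}. real_of_int (c l) - d l = 0"
      using indep_coeffs[OF injg indg finite_atLeastAtMost s0] by blast
    then have "real_of_int (c j) = 1" "real_of_int (c i) = - of_int k"
      using ij by (auto simp: d_def)
    then show False using sgn kpos ij by force
  qed
  have zeroP: "H = 0" if H: "H \<in> span \<Psi>" "\<forall>i\<in>{1..m}. H \<bullet> \<gamma> i \<ge> 0"
      "\<forall>j\<in>{1..m}. \<gamma> 1 \<bullet> H \<ge> \<gamma> j \<bullet> H" and P0: "P H = 0" for H
  proof -
    have "H \<in> span \<Psi>\<^sub>1" using diffspan[of H] P0 by simp
    then have "H \<in> span (\<gamma> ` {2..m})" using P1span span_mono span_span by blast
    then obtain u where u: "H = (\<Sum>v\<in>\<gamma> ` {2..m}. u v *\<^sub>R v)" using span_finite[of "\<gamma> ` {2..m}"] by auto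
    have inj2: "inj_on \<gamma> {2..m}" using injg by (rule inj_on_subset) auto
    have Hs: "H = (\<Sum>j\<in>{2..m}. u (\<gamma> j) *\<^sub>R \<gamma> j)" using u by (simp add: sum.reindex[OF inj2])
    show "H = 0"
    proof (rule dom_zero[OF _ _ _ _ Hs])
      show "finite {2..m}" by simp
      show "1 \<notin> {2..m::nat}" by simp
      show "\<gamma> i \<bullet> \<gamma> j \<le> 0" if "i \<in> {2..m}" "j \<in> {2..m}" "i \<noteq> j" for i j
        using obtuse that by auto
      show "\<gamma> 1 \<bullet> \<gamma> j \<le> 0" if "j \<in> {2..m}" for j
        using obtuse that assms(2) by auto
      show "H \<bullet> \<gamma> j \<ge> 0" if "j \<in> {2..m}" for j using H that by auto
      show "\<gamma> 1 \<bullet> H \<ge> \<gamma> j \<bullet> H" if "j \<in> {2..m}" for j using H that by auto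
    qed
  qed
  define K where "K = span \<Psi> \<inter> sphere 0 1 \<inter> (\<Inter>i\<in>{1..m}. {H. 0 \<le> \<gamma> i \<bullet> H})
      \<inter> (\<Inter>j\<in>{1..m}. {H. 0 \<le> (\<gamma> 1 - \<gamma> j) \<bullet> H})"
  have Kmem: "H \<in> K \<longleftrightarrow> H \<in> span \<Psi> \<and> norm H = 1 \<and> (\<forall>i\<in>{1..m}. H \<bullet> \<gamma> i \<ge> 0)
      \<and> (\<forall>j\<in>{1..m}. \<gamma> 1 \<bullet> H \<ge> \<gamma> j \<bullet> H)" for H
    by (auto simp: K_def inner_commute inner_diff_left inner_diff_right)
  have compK: "compact K"
  proof -
    have "closed K" unfolding K_def
      by (intro closed_Int closed_span closed_sphere closed_INT ballI closed_halfspace_ge)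
    moreover have "bounded K" unfolding K_def by (rule bounded_subset[OF bounded_sphere]) auto
    ultimately show ?thesis by (simp add: compact_eq_bounded_closed)
  qed
  have contP: "continuous_on K (\<lambda>H. norm (P H))"
    using linP by (intro continuous_on_norm linear_continuous_on) (simp add: linear_conv_bounded_linear)
  obtain a where apos: "a > 0" and abnd: "\<And>H. H \<in> K \<Longrightarrow> norm (P H) \<ge> a"
  proof (cases "K = {}")
    case True then show ?thesis using that[of 1] by auto
  next
    case False
    then obtain x where x: "x \<in> K" and xmin: "\<And>y. y \<in> K \<Longrightarrow> norm (P x) \<le> norm (P y)"
      using continuous_attains_inf[OF compK False contP] by blast
    have "P x \<noteq> 0"
    proof
      assume "P x = 0"
      then have "x = 0" using zeroP x Kmem by blast
      then show False using x Kmem by simp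
    qed
    then show ?thesis using that[of "norm (P x)"] xmin by auto
  qed
  have part5: "\<exists>a>0. \<exists>b>0. \<forall>H\<in>R\<^sub>1. norm (P H) \<ge> a * norm H \<and> norm (H - P H) \<le> b * norm (P H)"
  proof (intro exI conjI ballI)
    show "a > 0" using apos .
    show "1 / a > 0" using apos by simp
    fix H assume H: "H \<in> R\<^sub>1"
    then have Hs: "H \<in> span \<Psi>" "norm H \<ge> 1" "\<forall>i\<in>{1..m}. H \<bullet> \<gamma> i \<ge> 0"
        "\<forall>j\<in>{1..m}. \<gamma> 1 \<bullet> H \<ge> \<gamma> j \<bullet> H"
      using assms(4,8) by (auto simp: less_imp_le)
    define t where "t = 1 / norm H"
    have Hnz: "norm H > 0" using Hs(2) by linarith
    have tpos: "t > 0" using Hnz by (simp add: t_def)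
    have "t *\<^sub>R H \<in> K" unfolding Kmem using Hs tpos
      by (auto simp: span_scale t_def inner_scaleR_right mult_left_mono intro!: divide_right_mono)
    then have "norm (P (t *\<^sub>R H)) \<ge> a" by (rule abnd)
    then have "t * norm (P H) \<ge> a" using tpos by (simp add: linear_scale[OF linP])
    then show "norm (P H) \<ge> a * norm H" using Hnz by (simp add: t_def pos_le_divide_eq)
    have "orthogonal (H - P H) (P H)"
      using orthS[OF diffspan[of H]] by (simp add: orthogonal_commute)
    then have "norm H ^ 2 = norm (H - P H) ^ 2 + norm (P H) ^ 2"
      using norm_add_Pythagorean[of "H - P H" "P H"] by simp
    then have "norm (H - P H) \<le> norm H"
      by (metis add_increasing2 le_add_same_cancel1 norm_ge_zero power2_le_imp_le zero_le_power2)
    also have "\<dots> \<le> norm (P H) / a" using \<open>norm (P H) \<ge> a * norm H\<close> apos by (simp add: field_simps)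
    finally show "norm (H - P H) \<le> 1 / a * norm (P H)" by simp
  qed
  show ?thesis using part1 part2 part3 part4 part5 by blast
qed

end
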